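(* For all integers $n\ge 2$ and $1\le k<n$, the vertex covering number of $G=H_B(n,k)$ is $\beta(G)=\binom{n}{k}$.
   Context: Fix integers $n\ge 2$ and $1\le k<n$ and positive real numbers $x_1<x_2<\dots<x_n$. Let $\mathscr{B}_n=\{\pm x_1,\pm x_2,\dots,\pm x_{n-1},x_n\}$ (so $-x_n\notin\mathscr{B}_n$). Let $\phi(\mathscr{B}_n)$ be the family of all nonempty subsets $S\subseteq\mathscr{B}_n$ whose elements have pairwise distinct absolute values and whose element of largest absolute value is positive. Let $\mathscr{B}_n^+=\{x_1,\dots,x_n\}$, let $V_1$ be the set of all $k$-element subsets of $\mathscr{B}_n^+$, and let $V_2=\phi(\mathscr{B}_n)\setminus V_1$. For $A\in\phi(\mathscr{B}_n)$ put $A^\dagger=\{|a|:a\in A\}$. The bipartite Kneser B type-$k$ graph $H_B(n,k)$ is the simple graph with vertex set $V_1\cup V_2$ in which $X\in V_1$ and $Y\in V_2$ are adjacent if and only if $X\subseteq Y^\dagger$ or $Y^\dagger\subseteq X$, and there are no other edges. The vertex covering number is the minimum size of a set of vertices meeting every edge. *)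

theory Defs
  imports Complex_Main
begin

definition B_set :: "(nat \<Rightarrow> real) \<Rightarrow> nat \<Rightarrow> real set" where
  "B_set x n = {x i | i. 1 \<le> i \<and> i \<le> n} \<union> {- x i | i. 1 \<le> i \<and> i < n}"

definition B_plus :: "(nat \<Rightarrow> real) \<Rightarrow> nat \<Rightarrow> real set" where
  "B_plus x n = {x i | i. 1 \<le> i \<and> i \<le> n}"

definition phi_B :: "(nat \<Rightarrow> real) \<Rightarrow> nat \<Rightarrow> real set set" where
  "phi_B x n = {S. S \<subseteq> B_set x n \<and> S \<noteq> {} \<and> inj_on abs S \<and>
      (\<forall>a\<in>S. (\<forall>b\<in>S. \<bar>b\<bar> \<le> \<bar>a\<bar>) \<longrightarrow> a > 0)}"

definition V1 :: "(nat \<Rightarrow> real) \<Rightarrow> nat \<Rightarrow> nat \<Rightarrow> real set set" where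
  "V1 x n k = {X. X \<subseteq> B_plus x n \<and> card X = k}"

definition V2 :: "(nat \<Rightarrow> real) \<Rightarrow> nat \<Rightarrow> nat \<Rightarrow> real set set" where
  "V2 x n k = phi_B x n - V1 x n k"

definition dagger :: "real set \<Rightarrow> real set" where
  "dagger A = abs ` A"

definition HB_vertices :: "(nat \<Rightarrow> real) \<Rightarrow> nat \<Rightarrow> nat \<Rightarrow> real set set" where
  "HB_vertices x n k = V1 x n k \<union> V2 x n k"

definition HB_edge :: "(nat \<Rightarrow> real) \<Rightarrow> nat \<Rightarrow> nat \<Rightarrow> real set \<Rightarrow> real set \<Rightarrow> bool" where
  "HB_edge x n k U W \<longleftrightarrow>
     (U \<in> V1 x n k \<and> W \<in> V2 x n k \<and> (U \<subseteq> dagger W \<or> dagger W \<subseteq> U)) \<or>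
     (W \<in> V1 x n k \<and> U \<in> V2 x n k \<and> (W \<subseteq> dagger U \<or> dagger U \<subseteq> W))"

definition is_vertex_cover :: "'a set \<Rightarrow> ('a \<Rightarrow> 'a \<Rightarrow> bool) \<Rightarrow> 'a set \<Rightarrow> bool" where
  "is_vertex_cover V E C \<longleftrightarrow> C \<subseteq> V \<and> (\<forall>u\<in>V. \<forall>v\<in>V. E u v \<longrightarrow> u \<in> C \<or> v \<in> C)"

definition vertex_cover_number :: "'a set \<Rightarrow> ('a \<Rightarrow> 'a \<Rightarrow> bool) \<Rightarrow> nat" where
  "vertex_cover_number V E = Min {card C | C. is_vertex_cover V E C}"

end

theory Submission
  imports Defs
begin

lemma generic:
  fixes x :: "nat \<Rightarrow> real" and n k :: nat
  defines "P \<equiv> B_plus x n"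
  assumes finP: "finite P" and pos: "\<forall>a\<in>P. 0 < a" and MP: "x n \<in> P"
    and Mmax: "\<forall>a\<in>P. a \<le> x n"
    and Bdef: "B_set x n = P \<union> uminus ` (P - {x n})"
    and c2: "card P \<ge> 2" and k1: "1 \<le> k" and kc: "k < card P"
  shows "vertex_cover_number (HB_vertices x n k) (HB_edge x n k) = card P choose k"
proof -
  define M where "M = x n"
  define B where "B = B_set x n"
  have B: "B = P \<union> uminus ` (P - {M})" using Bdef by (simp add: B_def M_def)
  have finB: "finite B" using B finP by simp
  have V1eq: "V1 x n k = {X. X \<subseteq> P \<and> card X = k}" by (simp add: V1_def P_def)
  have phi: "phi_B x n = {S. S \<subseteq> B \<and> S \<noteq> {} \<and> inj_on abs S \<and>
      (\<forall>a\<in>S. (\<forall>b\<in>S. \<bar>b\<bar> \<le> \<bar>a\<bar>) \<longrightarrow> a > 0)}" by (simp add: phi_B_def B_def)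
  define V where "V = HB_vertices x n k"
  define E where "E = HB_edge x n k"
  have Vsub: "V \<subseteq> Pow B"
  proof -
    have "P \<subseteq> B" using B by blast
    then have "V1 x n k \<subseteq> Pow B" using V1eq by blast
    moreover have "V2 x n k \<subseteq> Pow B" unfolding V2_def phi by blast
    ultimately show ?thesis unfolding V_def HB_vertices_def by blast
  qed
  have finV: "finite V" using Vsub finB by (meson finite_Pow_iff finite_subset)
  have V1V: "V1 x n k \<subseteq> V" by (simp add: V_def HB_vertices_def)
  have disj: "V1 x n k \<inter> V2 x n k = {}" by (auto simp: V2_def)
  have V1cov: "is_vertex_cover V E (V1 x n k)"
    unfolding is_vertex_cover_def E_def HB_edge_def using V1V by blast
  have cardV1: "card (V1 x n k) = card P choose k"
    using V1eq n_subsets[OF finP] by simp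
  obtain m0 where m0: "m0 \<in> P" "m0 \<noteq> M"
  proof -
    have "card (P - {M}) \<ge> 1" using c2 MP M_def finP by (simp add: card_Diff_singleton)
    then have "P - {M} \<noteq> {}" by (metis card.empty not_one_le_zero)
    then show ?thesis using that by blast
  qed
  define f where "f X = (if 2 \<le> k then insert (-(Min X)) (X - {Min X})
      else if X = {M} then {m0, M} else insert M (uminus ` X))" for X
  have PB: "P \<subseteq> B" using B by blast
  have Mpos: "M > 0" using pos MP M_def by blast
  have m0pos: "m0 > 0" using pos m0 by blast
  have big: "f X \<in> V2 x n k \<and> X \<subseteq> dagger (f X) \<and> (2 \<le> k \<longrightarrow> abs ` f X = X)"
    if XV: "X \<in> V1 x n k" for X
  proof -
    have XP: "X \<subseteq> P" and cX: "card X = k" using XV V1eq by auto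
    have finX: "finite X" using XP finP finite_subset by blast
    have Xpos: "\<And>y. y \<in> X \<Longrightarrow> 0 < y" using XP pos by blast
    have notV1: "f X \<notin> V1 x n k" if "u \<in> f X" "u < 0" for u
      using that pos V1eq by force
    show ?thesis
    proof (cases "2 \<le> k")
      case True
      define m where "m = Min X"
      have Xne: "X \<noteq> {}" using cX True by auto
      have mX: "m \<in> X" using Min_in[OF finX Xne] m_def by simp
      have mle: "\<And>y. y \<in> X \<Longrightarrow> m \<le> y" using Min_le[OF finX] m_def by simp
      obtain b where b: "b \<in> X" "b \<noteq> m"
      proof -
        have "card (X - {m}) \<ge> 1" using cX True mX finX by (simp add: card_Diff_singleton)
        then have "X - {m} \<noteq> {}" by (metis card.empty not_one_le_zero)
        then show ?thesis using that by blast
      qed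
      have mb: "m < b" using mle[OF b(1)] b(2) by simp
      have mpos: "0 < m" using Xpos mX by blast
      have mM: "m \<noteq> M" using mb b(1) XP Mmax M_def by force
      have fX: "f X = insert (-m) (X - {m})" using True by (simp add: f_def m_def)
      have sub: "f X \<subseteq> B" using fX XP PB B mX mM by blast
      have inj: "inj_on abs (f X)"
      proof -
        have "inj_on abs (X - {m})"
          by (rule inj_onI) (metis DiffD1 Xpos abs_of_pos)
        moreover have "\<bar>-m\<bar> \<notin> abs ` ((X - {m}) - {-m})" using Xpos by auto
        ultimately show ?thesis using fX by simp
      qed
      have mx: "\<forall>a\<in>f X. (\<forall>c\<in>f X. \<bar>c\<bar> \<le> \<bar>a\<bar>) \<longrightarrow> a > 0"
      proof (intro ballI impI)
        fix a assume a: "a \<in> f X" and al: "\<forall>c\<in>f X. \<bar>c\<bar> \<le> \<bar>a\<bar>"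
        show "a > 0"
        proof (cases "a = -m")
          case True
          have "b \<in> f X" using fX b by simp
          then have "\<bar>b\<bar> \<le> \<bar>a\<bar>" using al by blast
          then show ?thesis using True mb mpos by simp
        next
          case False then show ?thesis using a fX Xpos by auto
        qed
      qed
      have "f X \<in> phi_B x n" unfolding phi using sub inj mx fX by blast
      moreover have "f X \<notin> V1 x n k" using notV1[of "-m"] fX mpos by simp
      moreover have "abs ` f X = X"
      proof
        show "abs ` f X \<subseteq> X" using fX Xpos mX mpos by (auto simp: abs_of_pos)
        show "X \<subseteq> abs ` f X"
        proof
          fix y assume y: "y \<in> X"
          show "y \<in> abs ` f X"
          proof (cases "y = m")
            case True then show ?thesis using fX mpos by (simp add: image_iff)
          next
            case False then have "y \<in> f X" using fX y by simp
            then show ?thesis using Xpos[OF y] by (metis abs_of_pos image_eqI)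
          qed
        qed
      qed
      ultimately show ?thesis by (simp add: V2_def dagger_def)
    next
      case False
      then have k1': "k = 1" using k1 by simp
      then obtain a where Xa: "X = {a}" using cX card_1_singletonE by blast
      have aP: "a \<in> P" using Xa XP by simp
      have apos: "0 < a" using aP pos by blast
      show ?thesis
      proof (cases "a = M")
        case True
        have fX: "f X = {m0, M}" using Xa True k1' by (simp add: f_def)
        have "f X \<in> phi_B x n" unfolding phi fX
          using m0 MP M_def PB m0pos Mpos by (auto simp: inj_on_def)
        moreover have "f X \<notin> V1 x n k" using fX m0 k1' V1eq by auto
        moreover have "X \<subseteq> dagger (f X)" using fX Xa True Mpos
          by (auto simp: dagger_def image_iff)
        ultimately show ?thesis using False by (simp add: V2_def)
      next
        case aM: False
        have fX: "f X = {M, -a}" using Xa aM k1' by (simp add: f_def)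
        have aM': "a < M" using aM Mmax aP M_def by force
        have "-a \<in> uminus ` (P - {M})" using aP aM by blast
        then have sub: "f X \<subseteq> B" using fX MP M_def B by auto
        have "f X \<in> phi_B x n" unfolding phi
        proof (intro CollectI conjI)
          show "f X \<subseteq> B" by (rule sub)
          show "f X \<noteq> {}" using fX by simp
          show "inj_on abs (f X)" using fX apos Mpos aM' by (auto simp: inj_on_def)
          show "\<forall>a'\<in>f X. (\<forall>b\<in>f X. \<bar>b\<bar> \<le> \<bar>a'\<bar>) \<longrightarrow> 0 < a'"
            using fX apos Mpos aM' by auto
        qed
        moreover have "f X \<notin> V1 x n k" using notV1[of "-a"] fX apos by simp
        moreover have "X \<subseteq> dagger (f X)" using fX Xa apos
          by (auto simp: dagger_def image_iff)
        ultimately show ?thesis using False by (simp add: V2_def)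
      qed
    qed
  qed
  have fprop: "f X \<in> V2 x n k \<and> X \<subseteq> dagger (f X)" if XV: "X \<in> V1 x n k" for X
    using big[OF XV] by blast
  have finj: "inj_on f (V1 x n k)"
  proof (rule inj_onI)
    fix X Y assume X: "X \<in> V1 x n k" and Y: "Y \<in> V1 x n k" and eq: "f X = f Y"
    show "X = Y"
    proof (cases "2 \<le> k")
      case True
      then show ?thesis using big[OF X] big[OF Y] eq by metis
    next
      case False
      then have k1': "k = 1" using k1 by simp
      have "card X = 1" using X V1eq k1' by auto
      then obtain a where Xa: "X = {a}" using card_1_singletonE by blast
      have "card Y = 1" using Y V1eq k1' by auto
      then obtain b where Yb: "Y = {b}" using card_1_singletonE by blast
      have apos: "a > 0" "b > 0" using Xa Yb X Y V1eq pos by auto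
      have fa: "f X = (if a = M then {m0, M} else {M, -a})" using Xa k1' by (simp add: f_def)
      have fb: "f Y = (if b = M then {m0, M} else {M, -b})" using Yb k1' by (simp add: f_def)
      show ?thesis
        using eq fa fb apos Mpos m0pos Xa Yb
        by (auto simp: doubleton_eq_iff split: if_splits)
    qed
  qed
  have lower: "card (V1 x n k) \<le> card C" if C: "is_vertex_cover V E C" for C
  proof -
    define g where "g X = (if X \<in> C then X else f X)" for X
    have CV: "C \<subseteq> V" using C by (simp add: is_vertex_cover_def)
    have finC: "finite C" using CV finV finite_subset by blast
    have gC: "g X \<in> C" if "X \<in> V1 x n k" for X
    proof (cases "X \<in> C")
      case False
      have "f X \<in> V" using fprop[OF that] by (simp add: V_def HB_vertices_def)
      moreover have "E X (f X)" using fprop[OF that] that by (simp add: E_def HB_edge_def)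
      moreover have "X \<in> V" using that V1V by blast
      ultimately have "X \<in> C \<or> f X \<in> C" using C unfolding is_vertex_cover_def by blast
      then show ?thesis using False by (simp add: g_def)
    qed (simp add: g_def)
    have "inj_on g (V1 x n k)"
    proof (rule inj_onI)
      fix X Y assume X: "X \<in> V1 x n k" and Y: "Y \<in> V1 x n k" and eq: "g X = g Y"
      show "X = Y"
      proof (cases "X \<in> C"; cases "Y \<in> C")
        assume "X \<in> C" "Y \<notin> C"
        then have "X = f Y" using eq by (simp add: g_def)
        then show ?thesis using fprop[OF Y] X disj by blast
      next
        assume "X \<notin> C" "Y \<in> C"
        then have "Y = f X" using eq by (simp add: g_def)
        then show ?thesis using fprop[OF X] Y disj by blast
      next
        assume "X \<notin> C" "Y \<notin> C"
        then have "f X = f Y" using eq by (simp add: g_def)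
        then show ?thesis using finj X Y by (meson inj_onD)
      qed (use eq in \<open>simp add: g_def\<close>)
    qed
    then show ?thesis using gC finC by (meson card_inj_on_le image_subsetI)
  qed
  define S where "S = {card C | C. is_vertex_cover V E C}"
  have finS: "finite S"
  proof -
    have "S \<subseteq> card ` Pow V" unfolding S_def is_vertex_cover_def by blast
    then show ?thesis using finV by (meson finite_Pow_iff finite_imageI finite_subset)
  qed
  have "Min S = card (V1 x n k)"
  proof (rule Min_eqI[OF finS])
    show "card (V1 x n k) \<in> S" using V1cov S_def by blast
    fix y assume "y \<in> S" then show "card (V1 x n k) \<le> y" using lower S_def by blast
  qed
  then show ?thesis using cardV1 by (simp add: vertex_cover_number_def S_def V_def E_def)
qed

theorem mainTheorem3:
  fixes x :: "nat \<Rightarrow> real" and n k :: nat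
  assumes "n \<ge> 2" and "1 \<le> k" and "k < n"
    and "0 < x 1"
    and "\<And>i j. 1 \<le> i \<Longrightarrow> i < j \<Longrightarrow> j \<le> n \<Longrightarrow> x i < x j"
  shows "vertex_cover_number (HB_vertices x n k) (HB_edge x n k) = n choose k"
proof -
  note mono = assms(5)
  have Pim: "B_plus x n = x ` {1..n}" by (auto simp: B_plus_def)
  have inj: "inj_on x {1..n}"
  proof (rule inj_onI)
    fix i j assume i: "i \<in> {1..n}" and j: "j \<in> {1..n}" and e: "x i = x j"
    show "i = j"
    proof (rule ccontr)
      assume "i \<noteq> j"
      then consider "i < j" | "j < i" by linarith
      then show False
        by cases (use mono[of i j] mono[of j i] i j e in auto)
    qed
  qed
  have cardP: "card (B_plus x n) = n" using Pim inj by (simp add: card_image)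
  have pos: "\<forall>a\<in>B_plus x n. 0 < a"
  proof
    fix a assume "a \<in> B_plus x n"
    then obtain i where i: "i \<in> {1..n}" "a = x i" using Pim by auto
    show "0 < a"
    proof (cases "i = 1")
      case True then show ?thesis using i assms(4) by simp
    next
      case False then show ?thesis using i assms(4) mono[of 1 i] by auto
    qed
  qed
  have MP: "x n \<in> B_plus x n" using Pim assms(1) by auto
  have Mmax: "\<forall>a\<in>B_plus x n. a \<le> x n"
  proof
    fix a assume "a \<in> B_plus x n"
    then obtain i where i: "i \<in> {1..n}" "a = x i" using Pim by auto
    show "a \<le> x n"
    proof (cases "i = n")
      case False then show ?thesis using i mono[of i n] by auto
    qed (use i in simp)
  qed
  have Bs: "B_set x n = B_plus x n \<union> uminus ` (B_plus x n - {x n})"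
  proof -
    have "{- x i | i. 1 \<le> i \<and> i < n} = uminus ` (x ` {1..n} - {x n})"
    proof
      show "{- x i | i. 1 \<le> i \<and> i < n} \<subseteq> uminus ` (x ` {1..n} - {x n})"
      proof
        fix a assume "a \<in> {- x i | i. 1 \<le> i \<and> i < n}"
        then obtain i where i: "1 \<le> i" "i < n" "a = - x i" by auto
        have "x i \<noteq> x n" using mono[of i n] i by auto
        then show "a \<in> uminus ` (x ` {1..n} - {x n})" using i by auto
      qed
      show "uminus ` (x ` {1..n} - {x n}) \<subseteq> {- x i | i. 1 \<le> i \<and> i < n}"
      proof
        fix a assume "a \<in> uminus ` (x ` {1..n} - {x n})"
        then obtain b where b: "b \<in> x ` {1..n}" "b \<noteq> x n" "a = - b" by blast
        then obtain i where i: "1 \<le> i" "i \<le> n" "x i \<noteq> x n" "a = - x i" by auto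
        then have "i < n" by (cases "i = n") auto
        then show "a \<in> {- x i | i. 1 \<le> i \<and> i < n}" using i by auto
      qed
    qed
    then show ?thesis using Pim by (simp add: B_set_def B_plus_def)
  qed
  have fin: "finite (B_plus x n)" using Pim by simp
  show ?thesis
    using generic[OF fin pos MP Mmax Bs] cardP assms(1,2,3) by simp
qed

end
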